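(* Let $\Omega\subset(\mathbb R+i\mathbb T)^s$ be a finite set of $N=\#\Omega$ frequencies, $\mathbb T=\mathbb R/2\pi\mathbb Z$, and let $f(x)=\sum_{\omega\in\Omega}f_\omega e^{\omega^Tx}$ with all $f_\omega\in\mathbb C\setminus\{0\}$. Let $X_\Omega=\{x_\omega=(e^{\omega_1},\dots,e^{\omega_s}):\omega\in\Omega\}$, $I_\Omega=\{p\in\Pi:p(x_\omega)=0\ \forall\omega\in\Omega\}$, $\Upsilon_N=\{\alpha\in\mathbb N_0^s:\prod_j(\alpha_j+1)\le N\}$, and let $A\subset\mathbb N_0^s$ be finite. Define $F_{\Upsilon_N,A}=[f(\alpha+\beta)]_{\alpha\in\Upsilon_N,\beta\in A}$. Then a vector $p=(p_\beta)_{\beta\in A}\in\mathbb C^A$ satisfies $F_{\Upsilon_N,A}\,p=0$ if and only if the polynomial $p(x)=\sum_{\beta\in A}p_\beta x^\beta$ belongs to $I_\Omega\cap\Pi_A$.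
   Context: $\Pi=\mathbb C[x_1,\dots,x_s]$; for $A\subset\mathbb N_0^s$, $\Pi_A$ is the span of the monomials $x^\beta$, $\beta\in A$, and a vector in $\mathbb C^A$ is identified with the polynomial in $\Pi_A$ having these coefficients. Restricting imaginary parts of frequencies to $\mathbb T$ makes the points $x_\omega$, $\omega\in\Omega$, pairwise distinct. *)

theory Defs
  imports Complex_Main
begin

text \<open>Dimension s is encoded by a finite index type 's; multi-indices are
  functions 's \<Rightarrow> nat, frequencies and points are functions 's \<Rightarrow> complex.\<close>

definition point_of :: "('s \<Rightarrow> complex) \<Rightarrow> ('s \<Rightarrow> complex)" where
  "point_of \<omega> = (\<lambda>j. exp (\<omega> j))"

definition monomial_val :: "('s::finite \<Rightarrow> nat) \<Rightarrow> ('s \<Rightarrow> complex) \<Rightarrow> complex" where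
  "monomial_val \<beta> x = (\<Prod>j\<in>UNIV. x j ^ \<beta> j)"

definition poly_eval :: "('s::finite \<Rightarrow> nat) set \<Rightarrow> (('s \<Rightarrow> nat) \<Rightarrow> complex) \<Rightarrow> ('s \<Rightarrow> complex) \<Rightarrow> complex" where
  "poly_eval A p x = (\<Sum>\<beta>\<in>A. p \<beta> * monomial_val \<beta> x)"

definition in_vanishing_ideal :: "('s::finite \<Rightarrow> complex) set \<Rightarrow> ('s \<Rightarrow> nat) set \<Rightarrow> (('s \<Rightarrow> nat) \<Rightarrow> complex) \<Rightarrow> bool" where
  "in_vanishing_ideal \<Omega> A p \<longleftrightarrow> (\<forall>\<omega>\<in>\<Omega>. poly_eval A p (point_of \<omega>) = 0)"

definition expsum :: "(('s::finite \<Rightarrow> complex) \<Rightarrow> complex) \<Rightarrow> ('s \<Rightarrow> complex) set \<Rightarrow> ('s \<Rightarrow> nat) \<Rightarrow> complex" where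
  "expsum c \<Omega> \<alpha> = (\<Sum>\<omega>\<in>\<Omega>. c \<omega> * exp (\<Sum>j\<in>UNIV. \<omega> j * of_nat (\<alpha> j)))"

definition Upsilon :: "nat \<Rightarrow> ('s::finite \<Rightarrow> nat) set" where
  "Upsilon N = {\<alpha>. (\<Prod>j\<in>UNIV. \<alpha> j + 1) \<le> N}"

end

theory Submission
  imports Defs "HOL-Analysis.Complex_Transcendental"
begin

lemma mono_shift:
  fixes x :: "'s::finite \<Rightarrow> complex"
  shows "monomial_val (\<alpha>(j := \<alpha> j + i)) x = x j ^ i * monomial_val \<alpha> x"
proof -
  have "monomial_val (\<alpha>(j := \<alpha> j + i)) x = x j ^ (\<alpha> j + i) * (\<Prod>l\<in>UNIV-{j}. x l ^ \<alpha> l)"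
    unfolding monomial_val_def by (subst prod.remove[of _ j]) auto
  also have "\<dots> = x j ^ i * (x j ^ \<alpha> j * (\<Prod>l\<in>UNIV-{j}. x l ^ \<alpha> l))"
    by (simp add: power_add)
  also have "x j ^ \<alpha> j * (\<Prod>l\<in>UNIV-{j}. x l ^ \<alpha> l) = monomial_val \<alpha> x"
    unfolding monomial_val_def by (subst (2) prod.remove[of _ j]) auto
  finally show ?thesis .
qed

lemma upsilon_shift:
  fixes \<alpha> :: "'s::finite \<Rightarrow> nat"
  assumes "\<alpha> \<in> Upsilon k" "m * k \<le> n" "i < m"
  shows "\<alpha>(j := \<alpha> j + i) \<in> Upsilon n"
proof -
  let ?R = "\<Prod>l\<in>UNIV-{j}. \<alpha> l + 1"
  have P: "(\<Prod>l\<in>UNIV. \<alpha> l + 1) = (\<alpha> j + 1) * ?R"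
    by (subst prod.remove[of _ j]) auto
  have "(\<Prod>l\<in>UNIV. (\<alpha>(j := \<alpha> j + i)) l + 1) = (\<alpha> j + i + 1) * ?R"
    by (subst prod.remove[of _ j]) auto
  also have "\<dots> \<le> ((\<alpha> j + 1) * m) * ?R"
  proof (rule mult_right_mono)
    have "\<alpha> j + i + 1 \<le> (\<alpha> j + 1) * (i + 1)" by (simp add: algebra_simps)
    also have "\<dots> \<le> (\<alpha> j + 1) * m" using assms(3) by (intro mult_le_mono2) simp
    finally show "\<alpha> j + i + 1 \<le> (\<alpha> j + 1) * m" .
  qed simp
  also have "\<dots> = m * (\<Prod>l\<in>UNIV. \<alpha> l + 1)" unfolding P by (simp add: algebra_simps)
  also have "\<dots> \<le> m * k" using assms(1) unfolding Upsilon_def by simp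
  finally show ?thesis using assms(2) unfolding Upsilon_def by simp
qed

lemma upsilon_mono: "a \<le> b \<Longrightarrow> Upsilon a \<subseteq> Upsilon b"
  unfolding Upsilon_def by auto

lemma lemL:
  fixes g :: "'i \<Rightarrow> 's::finite \<Rightarrow> complex"
  assumes "finite U"
  shows "(\<forall>i\<le>card U. (\<Sum>l\<in>I. d l * monomial_val (\<alpha>(j := \<alpha> j + i)) (g l)) = 0) \<Longrightarrow>
    (\<Sum>l\<in>I. d l * (\<Prod>u\<in>U. g l j - u) * monomial_val \<alpha> (g l)) = 0"
  using assms
proof (induction U arbitrary: \<alpha> rule: finite_induct)
  case empty
  then show ?case using spec[OF empty(1), of 0] by simp
next
  case (insert u F)
  define \<alpha>' where "\<alpha>' = \<alpha>(j := \<alpha> j + 1)"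
  have A: "(\<Sum>l\<in>I. d l * (\<Prod>u\<in>F. g l j - u) * monomial_val \<alpha>' (g l)) = 0"
  proof (rule insert.IH, intro allI impI)
    fix i assume "i \<le> card F"
    then have "Suc i \<le> card (insert u F)" using insert by simp
    then show "(\<Sum>l\<in>I. d l * monomial_val (\<alpha>'(j := \<alpha>' j + i)) (g l)) = 0"
      using insert.prems[rule_format, of "Suc i"] unfolding \<alpha>'_def by simp
  qed
  have B: "(\<Sum>l\<in>I. d l * (\<Prod>u\<in>F. g l j - u) * monomial_val \<alpha> (g l)) = 0"
  proof (rule insert.IH, intro allI impI)
    fix i assume "i \<le> card F"
    then have "i \<le> card (insert u F)" using insert by simp
    then show "(\<Sum>l\<in>I. d l * monomial_val (\<alpha>(j := \<alpha> j + i)) (g l)) = 0"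
      using insert.prems[rule_format, of "i"] by simp
  qed
  have "(\<Sum>l\<in>I. d l * (\<Prod>u\<in>insert u F. g l j - u) * monomial_val \<alpha> (g l))
     = (\<Sum>l\<in>I. d l * (\<Prod>u\<in>F. g l j - u) * monomial_val \<alpha>' (g l))
       - u * (\<Sum>l\<in>I. d l * (\<Prod>u\<in>F. g l j - u) * monomial_val \<alpha> (g l))"
  proof -
    have M: "\<And>x. monomial_val (\<alpha>(j := Suc (\<alpha> j))) x = x j * monomial_val \<alpha> x"
      using mono_shift[of \<alpha> j 1] by simp
    have "\<And>l. d l * (\<Prod>u\<in>insert u F. g l j - u) * monomial_val \<alpha> (g l)
      = d l * (\<Prod>u\<in>F. g l j - u) * monomial_val \<alpha>' (g l) - u * (d l * (\<Prod>u\<in>F. g l j - u) * monomial_val \<alpha> (g l))"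
      unfolding \<alpha>'_def using insert M by (simp add: algebra_simps)
    then show ?thesis by (simp add: sum_distrib_left sum_subtractf)
  qed
  then show ?case using A B by simp
qed

lemma indep:
  fixes g :: "'i \<Rightarrow> 's::finite \<Rightarrow> complex"
  shows "finite I \<Longrightarrow> card I = n \<Longrightarrow> inj_on g I \<Longrightarrow>
    (\<forall>\<alpha>\<in>Upsilon n. (\<Sum>l\<in>I. d l * monomial_val \<alpha> (g l)) = 0) \<Longrightarrow> \<forall>l\<in>I. d l = 0"
proof (induction n arbitrary: I d rule: less_induct)
  case (less n I d)
  show ?case
  proof (cases "n \<le> 1")
    case True
    show ?thesis
    proof (cases "n = 0")
      case True
      then show ?thesis using less.prems by simp
    next
      case False
      with True have "card I = 1" using less.prems by simp
      then obtain i where I: "I = {i}" by (rule card_1_singletonE)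
      have "(\<lambda>_. 0) \<in> (Upsilon n :: ('s \<Rightarrow> nat) set)" using False unfolding Upsilon_def by simp
      moreover have "monomial_val (\<lambda>_. 0) x = 1" for x :: "'s \<Rightarrow> complex"
        unfolding monomial_val_def by simp
      ultimately show ?thesis using less.prems(4) I by force
    qed
  next
    case False
    then have "I \<noteq> {}" using less.prems by auto
    then obtain i1 where i1: "i1 \<in> I" by blast
    have "card (I - {i1}) = n - 1" using less.prems i1 by simp
    then have "card (I - {i1}) > 0" using False by simp
    then have "I - {i1} \<noteq> {}" by (metis card_gt_0_iff)
    then obtain i2 where i2: "i2 \<in> I" "i2 \<noteq> i1" by blast
    then have "g i1 \<noteq> g i2" using less.prems(3) i1 by (metis inj_onD)
    then obtain j where j: "g i1 j \<noteq> g i2 j" by auto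
    define V where "V = (\<lambda>l. g l j) ` I"
    define Y where "Y = (\<lambda>v. {l\<in>I. g l j = v})"
    define m where "m = card V"
    have finV: "finite V" unfolding V_def using less.prems by simp
    have "{g i1 j, g i2 j} \<subseteq> V" unfolding V_def using i1 i2 by auto
    then have "card {g i1 j, g i2 j} \<le> m" unfolding m_def using finV card_mono by blast
    then have m2: "m \<ge> 2" using j by simp
    define k where "k = Min ((\<lambda>v. card (Y v)) ` V)"
    have "k \<in> (\<lambda>v. card (Y v)) ` V" unfolding k_def
      using finV m2 m_def by (intro Min_in) auto
    then obtain v where v: "v \<in> V" "card (Y v) = k" by auto
    have kle: "\<And>w. w \<in> V \<Longrightarrow> k \<le> card (Y w)" unfolding k_def using finV by simp
    have finY: "\<And>w. finite (Y w)" unfolding Y_def using less.prems by simp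
    have IU: "I = (\<Union>w\<in>V. Y w)" unfolding V_def Y_def by auto
    have "card I = (\<Sum>w\<in>V. card (Y w))"
      unfolding IU using finV finY by (subst card_UN_disjoint) (auto simp: Y_def)
    also have "\<dots> \<ge> (\<Sum>w\<in>V. k)" using kle by (intro sum_mono) auto
    finally have mk: "m * k \<le> n" using less.prems unfolding m_def by simp
    have "Y v \<noteq> {}" using v(1) unfolding V_def Y_def by auto
    then have k1: "k \<ge> 1" using v finY by (metis card_0_eq less_one not_le)
    have "2 * k \<le> m * k" using m2 by (rule mult_le_mono1)
    then have kn: "k < n" using mk k1 by linarith
    define U where "U = V - {v}"
    have finU: "finite U" unfolding U_def using finV by simp
    have cU: "card U = m - 1" unfolding U_def m_def using v finV by simp
    define Q where "Q = (\<lambda>l. \<Prod>u\<in>U. g l j - u)"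
    have hY: "\<forall>\<alpha>\<in>Upsilon k. (\<Sum>l\<in>Y v. (d l * Q l) * monomial_val \<alpha> (g l)) = 0"
    proof
      fix \<alpha> :: "'s \<Rightarrow> nat" assume a: "\<alpha> \<in> Upsilon k"
      have "(\<Sum>l\<in>I. d l * Q l * monomial_val \<alpha> (g l)) = 0" unfolding Q_def
      proof (rule lemL[OF finU], intro allI impI)
        fix i assume "i \<le> card U"
        then have "i < m" using cU m2 by simp
        then have "\<alpha>(j := \<alpha> j + i) \<in> Upsilon n" using upsilon_shift[OF a mk] by simp
        then show "(\<Sum>l\<in>I. d l * monomial_val (\<alpha>(j := \<alpha> j + i)) (g l)) = 0"
          using less.prems(4) by blast
      qed
      moreover have "(\<Sum>l\<in>I. d l * Q l * monomial_val \<alpha> (g l)) = (\<Sum>l\<in>Y v. d l * Q l * monomial_val \<alpha> (g l))"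
      proof (rule sum.mono_neutral_right)
        show "finite I" using less.prems by simp
        show "Y v \<subseteq> I" unfolding Y_def by auto
        show "\<forall>l\<in>I - Y v. d l * Q l * monomial_val \<alpha> (g l) = 0"
        proof
          fix l assume "l \<in> I - Y v"
          then have "g l j \<in> U" unfolding U_def V_def Y_def by auto
          then have "Q l = 0" unfolding Q_def using finU by (auto intro: prod_zero)
          then show "d l * Q l * monomial_val \<alpha> (g l) = 0" by simp
        qed
      qed
      ultimately show "(\<Sum>l\<in>Y v. (d l * Q l) * monomial_val \<alpha> (g l)) = 0" by simp
    qed
    have injY: "inj_on g (Y v)" using less.prems(3) unfolding Y_def by (auto intro: inj_on_subset)
    have zY: "\<forall>l\<in>Y v. d l * Q l = 0"
      by (rule less.IH[OF kn finY v(2) injY hY])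
    have dY: "\<forall>l\<in>Y v. d l = 0"
    proof
      fix l assume l: "l \<in> Y v"
      then have "g l j = v" unfolding Y_def by simp
      then have "Q l \<noteq> 0" unfolding Q_def U_def using finU U_def by auto
      then show "d l = 0" using zY l by (metis mult_eq_0_iff)
    qed
    have YI: "Y v \<subseteq> I" unfolding Y_def by auto
    have cR: "card (I - Y v) = n - k" using less.prems YI v finY by (simp add: card_Diff_subset)
    have nk: "n - k < n" using k1 kn by simp
    have hR: "\<forall>\<alpha>\<in>Upsilon (n - k). (\<Sum>l\<in>I - Y v. d l * monomial_val \<alpha> (g l)) = 0"
    proof
      fix \<alpha> :: "'s \<Rightarrow> nat" assume "\<alpha> \<in> Upsilon (n - k)"
      then have "\<alpha> \<in> Upsilon n" using upsilon_mono[of "n - k" n] by auto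
      then have "(\<Sum>l\<in>I. d l * monomial_val \<alpha> (g l)) = 0" using less.prems(4) by blast
      moreover have "(\<Sum>l\<in>Y v. d l * monomial_val \<alpha> (g l)) = 0" using dY by simp
      ultimately show "(\<Sum>l\<in>I - Y v. d l * monomial_val \<alpha> (g l)) = 0"
        using less.prems(1) YI by (simp add: sum_diff)
    qed
    have "\<forall>l\<in>I - Y v. d l = 0"
      by (rule less.IH[OF nk _ cR _ hR]) (use less.prems in \<open>auto intro: inj_on_subset\<close>)
    then show ?thesis using dY by blast
  qed
qed


lemma point_inj:
  assumes "\<forall>\<omega>\<in>\<Omega>. \<forall>j. 0 \<le> Im (\<omega> j) \<and> Im (\<omega> j) < 2 * pi"
  shows "inj_on point_of \<Omega>"
proof (rule inj_onI)
  fix a b assume a: "a \<in> \<Omega>" and b: "b \<in> \<Omega>" and e: "point_of a = point_of b"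
  show "a = b"
  proof
    fix j
    have "exp (a j) = exp (b j)" using e unfolding point_of_def by meson
    then obtain n :: int where n: "a j = b j + (of_int (2 * n) * pi) * \<i>" by (auto simp: exp_eq)
    then have "Im (a j) = Im (b j) + 2 * (of_int n * pi)" by simp
    moreover have "0 \<le> Im (a j)" "Im (a j) < 2 * pi" "0 \<le> Im (b j)" "Im (b j) < 2 * pi"
      using assms a b by auto
    ultimately have "of_int n * pi < 1 * pi" "(-1) * pi < of_int n * pi"
      by linarith+
    then have "of_int n < (1::real)" "(-1::real) < of_int n"
      using pi_gt_zero mult_less_cancel_right_pos by blast+
    then have "n = 0" by linarith
    then show "a j = b j" using n by simp
  qed
qed

lemma expsum_split:
  "expsum c \<Omega> (\<lambda>j. \<alpha> j + \<beta> j) =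
   (\<Sum>\<omega>\<in>\<Omega>. c \<omega> * monomial_val \<alpha> (point_of \<omega>) * monomial_val \<beta> (point_of \<omega>))"
proof -
  have "exp (\<Sum>j\<in>UNIV. \<omega> j * of_nat (\<alpha> j + \<beta> j)) =
        monomial_val \<alpha> (point_of \<omega>) * monomial_val \<beta> (point_of \<omega>)" for \<omega> :: "'a \<Rightarrow> complex"
  proof -
    have "exp (\<Sum>j\<in>UNIV. \<omega> j * of_nat (\<alpha> j + \<beta> j)) = (\<Prod>j\<in>UNIV. exp (\<omega> j) ^ (\<alpha> j + \<beta> j))"
      by (simp add: exp_sum exp_of_nat_mult[symmetric] mult.commute)
    also have "\<dots> = (\<Prod>j\<in>UNIV. exp (\<omega> j) ^ \<alpha> j * exp (\<omega> j) ^ \<beta> j)"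
      by (simp add: power_add)
    finally show ?thesis unfolding monomial_val_def point_of_def by (simp add: prod.distrib)
  qed
  then show ?thesis unfolding expsum_def by (simp add: mult.assoc)
qed

theorem theorem28:
  fixes \<Omega> :: "('s::finite \<Rightarrow> complex) set"
    and c :: "('s \<Rightarrow> complex) \<Rightarrow> complex"
    and A :: "('s \<Rightarrow> nat) set"
    and p :: "('s \<Rightarrow> nat) \<Rightarrow> complex"
  assumes "finite \<Omega>"
    and "\<forall>\<omega>\<in>\<Omega>. \<forall>j. 0 \<le> Im (\<omega> j) \<and> Im (\<omega> j) < 2 * pi"
    and "\<forall>\<omega>\<in>\<Omega>. c \<omega> \<noteq> 0"
    and "finite A"
  shows "(\<forall>\<alpha>\<in>Upsilon (card \<Omega>). (\<Sum>\<beta>\<in>A. expsum c \<Omega> (\<lambda>j. \<alpha> j + \<beta> j) * p \<beta>) = 0)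
         \<longleftrightarrow> in_vanishing_ideal \<Omega> A p"
proof -
  define d where "d = (\<lambda>\<omega>. c \<omega> * poly_eval A p (point_of \<omega>))"
  have S: "(\<Sum>\<beta>\<in>A. expsum c \<Omega> (\<lambda>j. \<alpha> j + \<beta> j) * p \<beta>) =
           (\<Sum>\<omega>\<in>\<Omega>. d \<omega> * monomial_val \<alpha> (point_of \<omega>))" for \<alpha>
  proof -
    have "(\<Sum>\<beta>\<in>A. expsum c \<Omega> (\<lambda>j. \<alpha> j + \<beta> j) * p \<beta>) =
      (\<Sum>\<beta>\<in>A. \<Sum>\<omega>\<in>\<Omega>. c \<omega> * monomial_val \<alpha> (point_of \<omega>) * (p \<beta> * monomial_val \<beta> (point_of \<omega>)))"
      unfolding expsum_split sum_distrib_right by (intro sum.cong refl) (simp add: algebra_simps)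
    also have "\<dots> = (\<Sum>\<omega>\<in>\<Omega>. \<Sum>\<beta>\<in>A. c \<omega> * monomial_val \<alpha> (point_of \<omega>) * (p \<beta> * monomial_val \<beta> (point_of \<omega>)))"
      by (rule sum.swap)
    also have "\<dots> = (\<Sum>\<omega>\<in>\<Omega>. d \<omega> * monomial_val \<alpha> (point_of \<omega>))"
      unfolding d_def poly_eval_def by (simp add: sum_distrib_left algebra_simps)
    finally show ?thesis .
  qed
  show ?thesis
  proof
    assume h: "\<forall>\<alpha>\<in>Upsilon (card \<Omega>). (\<Sum>\<beta>\<in>A. expsum c \<Omega> (\<lambda>j. \<alpha> j + \<beta> j) * p \<beta>) = 0"
    have "\<forall>\<omega>\<in>\<Omega>. d \<omega> = 0"
      by (rule indep[OF assms(1) refl point_inj[OF assms(2)]]) (use h S in simp)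
    then show "in_vanishing_ideal \<Omega> A p"
      unfolding in_vanishing_ideal_def d_def using assms(3) by simp
  next
    assume "in_vanishing_ideal \<Omega> A p"
    then have "\<forall>\<omega>\<in>\<Omega>. d \<omega> = 0" unfolding in_vanishing_ideal_def d_def by simp
    then show "\<forall>\<alpha>\<in>Upsilon (card \<Omega>). (\<Sum>\<beta>\<in>A. expsum c \<Omega> (\<lambda>j. \<alpha> j + \<beta> j) * p \<beta>) = 0"
      using S by simp
  qed
qed

end
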